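(* Let $G=(V,E,w)$ be an undirected graph without self-loops, with $n\ge 2$ vertices, positive edge weights and conductance $\Phi_G>0$. Let $\mathcal{T}^*$ be an optimal HC tree of $G$ with dense branch $(A_0,\dots,A_k)$, $k\ge 0$. If $|A_k|\ge (n-1)/2$, then every HC tree $\mathcal{T}$ of $G$ satisfies $\mathrm{cost}_G(\mathcal{T})\le \frac{8}{\Phi_G}\cdot\mathrm{cost}_G(\mathcal{T}^* )$.
   Context: $d_u=\sum_v w_{uv}$, $\mathrm{vol}(S)=\sum_{u\in S}d_u$, $\mathrm{vol}(G)=\mathrm{vol}(V)$; $\Phi_G(S)=w(S,V\setminus S)/\mathrm{vol}(S)$, $\Phi_G=\min\{\Phi_G(S):\emptyset\ne S\subset V,\ \mathrm{vol}(S)\le\mathrm{vol}(V)/2\}$. An HC tree is a rooted binary tree whose leaves are in bijection with $V$, nodes identified with their leaf vertex sets and $|N|$ the number of such vertices; $\mathrm{cost}_G(\mathcal{T})=\sum_{\{u,v\}\in E}w_{uv}|\mathsf{leaves}(\mathcal{T}[u\vee v])|$ with $u\vee v$ the lowest common ancestor. Dense branch: the path $(A_0,\dots,A_k)$ from the root $A_0$ where each $A_{i+1}$ is the child of $A_i$ of larger volume, and $A_k$ has $\mathrm{vol}(A_k)>\mathrm{vol}(G)/2$ while both its children have volume at most $\mathrm{vol}(G)/2$. *)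

theory Defs
  imports Complex_Main
begin

(* Weighted undirected graph without self-loops: finite vertex set V, weight
   function w, symmetric, zero on the diagonal, nonnegative; the edges are the
   pairs {u,v} with w u v > 0 (so all edge weights are positive). *)
definition wgraph :: "'a set \<Rightarrow> ('a \<Rightarrow> 'a \<Rightarrow> real) \<Rightarrow> bool" where
  "wgraph V w \<longleftrightarrow> finite V \<and> (\<forall>u\<in>V. \<forall>v\<in>V. w u v = w v u \<and> w u v \<ge> 0) \<and> (\<forall>u\<in>V. w u u = 0)"

definition deg :: "'a set \<Rightarrow> ('a \<Rightarrow> 'a \<Rightarrow> real) \<Rightarrow> 'a \<Rightarrow> real" where
  "deg V w u = (\<Sum>v\<in>V. w u v)"

definition vol :: "'a set \<Rightarrow> ('a \<Rightarrow> 'a \<Rightarrow> real) \<Rightarrow> 'a set \<Rightarrow> real" where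
  "vol V w S = (\<Sum>u\<in>S. deg V w u)"

definition cut_weight :: "('a \<Rightarrow> 'a \<Rightarrow> real) \<Rightarrow> 'a set \<Rightarrow> 'a set \<Rightarrow> real" where
  "cut_weight w S T = (\<Sum>u\<in>S. \<Sum>v\<in>T. w u v)"

definition cond_set :: "'a set \<Rightarrow> ('a \<Rightarrow> 'a \<Rightarrow> real) \<Rightarrow> 'a set \<Rightarrow> real" where
  "cond_set V w S = cut_weight w S (V - S) / vol V w S"

definition conductance :: "'a set \<Rightarrow> ('a \<Rightarrow> 'a \<Rightarrow> real) \<Rightarrow> real" where
  "conductance V w = Min {cond_set V w S | S. S \<noteq> {} \<and> S \<subset> V \<and> vol V w S \<le> vol V w V / 2}"

datatype 'a hctree = Leaf 'a | Node "'a hctree" "'a hctree"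

fun leaf_list :: "'a hctree \<Rightarrow> 'a list" where
  "leaf_list (Leaf x) = [x]"
| "leaf_list (Node l r) = leaf_list l @ leaf_list r"

definition leaves :: "'a hctree \<Rightarrow> 'a set" where
  "leaves t = set (leaf_list t)"

definition hc_tree :: "'a set \<Rightarrow> 'a hctree \<Rightarrow> bool" where
  "hc_tree V t \<longleftrightarrow> distinct (leaf_list t) \<and> set (leaf_list t) = V"

fun lca_size :: "'a hctree \<Rightarrow> 'a \<Rightarrow> 'a \<Rightarrow> nat" where
  "lca_size (Leaf x) u v = 1"
| "lca_size (Node l r) u v =
     (if u \<in> leaves l \<and> v \<in> leaves l then lca_size l u v
      else if u \<in> leaves r \<and> v \<in> leaves r then lca_size r u v
      else card (leaves (Node l r)))"

(* cost over the undirected edges {u,v}: each unordered pair is counted twice in the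
   double sum over ordered pairs, hence the factor 1/2; non-edges have weight 0 *)
definition hc_cost :: "'a set \<Rightarrow> ('a \<Rightarrow> 'a \<Rightarrow> real) \<Rightarrow> 'a hctree \<Rightarrow> real" where
  "hc_cost V w t = (\<Sum>u\<in>V. \<Sum>v\<in>V. w u v * real (lca_size t u v)) / 2"

definition optimal_hc_tree :: "'a set \<Rightarrow> ('a \<Rightarrow> 'a \<Rightarrow> real) \<Rightarrow> 'a hctree \<Rightarrow> bool" where
  "optimal_hc_tree V w t \<longleftrightarrow> hc_tree V t \<and> (\<forall>t'. hc_tree V t' \<longrightarrow> hc_cost V w t \<le> hc_cost V w t')"

(* Follow the dense branch from a node: move to the child of larger volume as long
   as that child has volume > vol(G)/2; return the last node A_k of the branch. *)
fun dense_end :: "'a set \<Rightarrow> ('a \<Rightarrow> 'a \<Rightarrow> real) \<Rightarrow> 'a hctree \<Rightarrow> 'a hctree" where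
  "dense_end V w (Leaf x) = Leaf x"
| "dense_end V w (Node l r) =
     (let vl = vol V w (leaves l); vr = vol V w (leaves r); h = vol V w V / 2 in
      if vl \<ge> vr then (if vl > h then dense_end V w l else Node l r)
      else (if vr > h then dense_end V w r else Node l r))"

end

theory Submission
  imports Defs
begin

lemma leaves_simps[simp]: "leaves (Leaf x) = {x}" "leaves (Node l r) = leaves l \<union> leaves r"
  by (auto simp: leaves_def)
lemma finite_leaves[simp]: "finite (leaves t)" by (simp add: leaves_def)
lemma leaves_ne: "leaves t \<noteq> {}" by (induction t) auto

lemma lca_sym: "lca_size t u v = lca_size t v u" by (induction t) auto

lemma lca_le_card: "lca_size t u v \<le> card (leaves t)"
proof (induction t)
  case (Node l r)
  have "card (leaves l) \<le> card (leaves (Node l r))" "card (leaves r) \<le> card (leaves (Node l r))"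
    by (auto intro!: card_mono)
  then show ?case using Node by auto
qed simp

lemma lca_ge2: "u \<in> leaves t \<Longrightarrow> v \<in> leaves t \<Longrightarrow> u \<noteq> v \<Longrightarrow> 2 \<le> lca_size t u v"
proof (induction t)
  case (Node l r)
  have "card {u,v} \<le> card (leaves (Node l r))" using Node.prems by (intro card_mono) auto
  then show ?case using Node by auto
qed simp

inductive sub where
  "sub t t" | "sub s l \<Longrightarrow> sub s (Node l r)" | "sub s r \<Longrightarrow> sub s (Node l r)"

lemma sub_leaves: "sub s t \<Longrightarrow> leaves s \<subseteq> leaves t" by (induction rule: sub.induct) auto
lemma sub_distinct: "sub s t \<Longrightarrow> distinct (leaf_list t) \<Longrightarrow> distinct (leaf_list s)"
  by (induction rule: sub.induct) auto
lemma disj: "distinct (leaf_list (Node l r)) \<Longrightarrow> leaves l \<inter> leaves r = {}"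
  by (auto simp: leaves_def)

lemma lca_sub_in: "sub s t \<Longrightarrow> distinct (leaf_list t) \<Longrightarrow> u \<in> leaves s \<Longrightarrow> v \<in> leaves s
   \<Longrightarrow> lca_size t u v = lca_size s u v"
proof (induction rule: sub.induct)
  case (2 s l r)
  then have "u \<in> leaves l" "v \<in> leaves l" using sub_leaves by blast+
  with 2 show ?case by simp
next
  case (3 s r l)
  then have "u \<in> leaves r" "v \<in> leaves r" using sub_leaves by blast+
  moreover have "u \<notin> leaves l" using calculation disj[OF "3.prems"(1)] by blast
  ultimately show ?case using 3 by simp
qed simp

lemma lca_sub_out: "sub s t \<Longrightarrow> distinct (leaf_list t) \<Longrightarrow> u \<in> leaves s \<Longrightarrow> v \<in> leaves t
   \<Longrightarrow> v \<notin> leaves s \<Longrightarrow> card (leaves s) \<le> lca_size t u v"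
proof (induction rule: sub.induct)
  case (2 s l r)
  have ul: "u \<in> leaves l" using 2 sub_leaves by blast
  have cs: "card (leaves s) \<le> card (leaves (Node l r))"
    using sub_leaves[OF 2(1)] by (intro card_mono) auto
  show ?case
  proof (cases "v \<in> leaves l")
    case True then show ?thesis using 2 ul by simp
  next
    case False
    have "u \<notin> leaves r" using ul disj[OF "2.prems"(1)] by blast
    then show ?thesis using False ul cs by simp
  qed
next
  case (3 s r l)
  have ur: "u \<in> leaves r" using 3 sub_leaves by blast
  have ul: "u \<notin> leaves l" using ur disj[OF "3.prems"(1)] by blast
  have cs: "card (leaves s) \<le> card (leaves (Node l r))"
    using sub_leaves[OF 3(1)] by (intro card_mono) auto
  show ?case
  proof (cases "v \<in> leaves r")
    case True then show ?thesis using 3 ur ul by simp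
  next
    case False
    then show ?thesis using ul ur cs by simp
  qed
qed simp

lemma dense_sub: "sub (dense_end V w t) t"
proof (induction V w t rule: dense_end.induct)
  case (2 V w l r)
  note a = "2"(1)[OF refl refl refl] "2"(2)[OF refl refl refl]
  show ?case using a by (auto simp: Let_def intro: sub.intros)
qed (auto intro: sub.intros)

lemma dense_node: "dense_end V w t = Node l r \<Longrightarrow> vol V w (leaves l) \<le> vol V w V / 2
   \<and> vol V w (leaves r) \<le> vol V w V / 2
   \<and> (leaves (Node l r) = leaves t \<or> vol V w (leaves (Node l r)) > vol V w V / 2)"
proof (induction V w t arbitrary: l r rule: dense_end.induct)
  case (2 V w l0 r0)
  define vl where "vl = vol V w (leaves l0)"
  define vr where "vr = vol V w (leaves r0)"
  define h where "h = vol V w V / 2"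
  have IH1: "dense_end V w l0 = Node l r \<Longrightarrow> vl \<ge> vr \<Longrightarrow> vl > h \<Longrightarrow> ?case"
  proof -
    assume a: "dense_end V w l0 = Node l r" "vl \<ge> vr" "vl > h"
    have "vol V w (leaves l) \<le> h \<and> vol V w (leaves r) \<le> h
      \<and> (leaves (Node l r) = leaves l0 \<or> vol V w (leaves (Node l r)) > h)"
      using "2.IH"(1)[OF refl refl refl, of l r] a unfolding vl_def vr_def h_def by blast
    then show ?case using a(3) unfolding vl_def h_def by (smt (verit))
  qed
  have IH2: "dense_end V w r0 = Node l r \<Longrightarrow> \<not> vl \<ge> vr \<Longrightarrow> vr > h \<Longrightarrow> ?case"
  proof -
    assume a: "dense_end V w r0 = Node l r" "\<not> vl \<ge> vr" "vr > h"
    have "vol V w (leaves l) \<le> h \<and> vol V w (leaves r) \<le> h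
      \<and> (leaves (Node l r) = leaves r0 \<or> vol V w (leaves (Node l r)) > h)"
      using "2.IH"(2)[OF refl refl refl, of l r] a unfolding vl_def vr_def h_def by blast
    then show ?case using a(3) unfolding vr_def h_def by (smt (verit))
  qed
  have de: "dense_end V w (Node l0 r0) = (if vl \<ge> vr then (if vl > h then dense_end V w l0 else Node l0 r0)
      else (if vr > h then dense_end V w r0 else Node l0 r0))"
    unfolding vl_def vr_def h_def by (simp add: Let_def)
  show ?case
  proof (cases "vl \<ge> vr")
    case True
    show ?thesis
    proof (cases "vl > h")
      case True2: True
      have "dense_end V w l0 = Node l r" using "2.prems" de True True2 by simp
      then show ?thesis using IH1 True True2 by blast
    next
      case False
      then have "l = l0" "r = r0" using True "2.prems" de by auto
      then show ?thesis using True False unfolding vl_def vr_def h_def by auto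
    qed
  next
    case False
    show ?thesis
    proof (cases "vr > h")
      case True2: True
      have "dense_end V w r0 = Node l r" using "2.prems" de False True2 by simp
      then show ?thesis using IH2 False True2 by blast
    next
      case F2: False
      then have "l = l0" "r = r0" using False "2.prems" de by auto
      then show ?thesis using False F2 unfolding vl_def vr_def h_def by auto
    qed
  qed
qed simp

lemma cw_union2: "finite B \<Longrightarrow> finite C \<Longrightarrow> B \<inter> C = {} \<Longrightarrow>
   cut_weight w S (B \<union> C) = cut_weight w S B + cut_weight w S C"
  unfolding cut_weight_def by (simp add: sum.union_disjoint sum.distrib)

lemma cw_union1: "finite A \<Longrightarrow> finite B \<Longrightarrow> A \<inter> B = {} \<Longrightarrow>
   cut_weight w (A \<union> B) T = cut_weight w A T + cut_weight w B T"
  unfolding cut_weight_def by (simp add: sum.union_disjoint)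

lemma cw_sym: "wgraph V w \<Longrightarrow> S \<subseteq> V \<Longrightarrow> T \<subseteq> V \<Longrightarrow> cut_weight w S T = cut_weight w T S"
  unfolding cut_weight_def
  apply (subst sum.swap)
  apply (rule sum.cong, simp)
  apply (rule sum.cong, simp)
  apply (auto simp: wgraph_def subset_iff)
  done

lemma vol_union: "finite A \<Longrightarrow> finite B \<Longrightarrow> A \<inter> B = {} \<Longrightarrow>
   vol V w (A \<union> B) = vol V w A + vol V w B"
  unfolding vol_def by (simp add: sum.union_disjoint)

lemma deg_nonneg: "wgraph V w \<Longrightarrow> u \<in> V \<Longrightarrow> deg V w u \<ge> 0"
  unfolding deg_def wgraph_def by (auto intro: sum_nonneg)

lemma vol_nonneg: "wgraph V w \<Longrightarrow> S \<subseteq> V \<Longrightarrow> vol V w S \<ge> 0"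
  unfolding vol_def using deg_nonneg by (meson subsetD sum_nonneg)

lemma cond_fin: "finite V \<Longrightarrow> finite {cond_set V w S |S. S \<noteq> {} \<and> S \<subset> V \<and> vol V w S \<le> vol V w V / 2}"
proof -
  assume "finite V"
  moreover have "{cond_set V w S |S. S \<noteq> {} \<and> S \<subset> V \<and> vol V w S \<le> vol V w V / 2} \<subseteq> cond_set V w ` Pow V"
    by auto
  ultimately show ?thesis by (meson finite_Pow_iff finite_imageI finite_subset)
qed

lemma cond_lemma:
  assumes g: "wgraph V w" and c: "conductance V w > 0" and "S \<noteq> {}" "S \<subset> V"
    "vol V w S \<le> vol V w V / 2"
  shows "cut_weight w S (V - S) \<ge> conductance V w * vol V w S"
proof -
  have fin: "finite V" using g by (simp add: wgraph_def)
  have "conductance V w \<le> cond_set V w S" unfolding conductance_def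
    using cond_fin[OF fin, of w] assms by (intro Min_le) auto
  then have ge: "cond_set V w S \<ge> conductance V w" .
  have v0: "vol V w S \<ge> 0" using vol_nonneg[OF g] assms by auto
  have "vol V w S \<noteq> 0" using ge c unfolding cond_set_def by auto
  then have "vol V w S > 0" using v0 by auto
  then show ?thesis using ge unfolding cond_set_def by (simp add: pos_le_divide_eq)
qed

lemma cond_le1:
  assumes g: "wgraph V w" and n: "card V \<ge> 2"
  shows "conductance V w \<le> 1"
proof -
  have fin: "finite V" using g by (simp add: wgraph_def)
  obtain a where a: "a \<in> V" using n by fastforce
  have "card (V - {a}) \<ge> 1" using n a fin by simp
  then have "V - {a} \<noteq> {}" by (metis card.empty not_one_le_zero)
  then obtain b where b: "b \<in> V" "b \<noteq> a" by blast
  define u where "u = (if deg V w a \<le> deg V w b then a else b)"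
  have uV: "u \<in> V" using a b u_def by auto
  have "deg V w a + deg V w b = (\<Sum>x\<in>{a,b}. deg V w x)" using b by simp
  also have "\<dots> \<le> vol V w V" unfolding vol_def using a b fin deg_nonneg[OF g]
    by (intro sum_mono2) auto
  finally have "deg V w u \<le> vol V w V / 2" unfolding u_def by auto
  then have vu: "vol V w {u} \<le> vol V w V / 2" by (simp add: vol_def)
  have sub: "{u} \<subset> V" using a b uV by auto
  have "cut_weight w {u} (V - {u}) \<le> deg V w u" unfolding cut_weight_def deg_def
    using fin g uV by simp (intro sum_mono2, auto simp: wgraph_def)
  then have "cond_set V w {u} \<le> 1" unfolding cond_set_def vol_def
    using deg_nonneg[OF g uV] by (auto simp: divide_le_eq_1)
  moreover have "conductance V w \<le> cond_set V w {u}" unfolding conductance_def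
    using cond_fin[OF fin, of w] sub vu by (intro Min_le) auto
  ultimately show ?thesis by linarith
qed

lemma sumsum: "finite V \<Longrightarrow> S \<subseteq> V \<Longrightarrow> T \<subseteq> V \<Longrightarrow>
  (\<Sum>u\<in>V. \<Sum>v\<in>V. if u \<in> S \<and> v \<in> T then w u v else 0) = cut_weight w S T"
proof -
  assume a: "finite V" "S \<subseteq> V" "T \<subseteq> V"
  have "(\<Sum>u\<in>V. \<Sum>v\<in>V. if u \<in> S \<and> v \<in> T then w u v else 0)
     = (\<Sum>u\<in>V. if u \<in> S then (\<Sum>v\<in>V. if v \<in> T then w u v else 0) else 0)"
    by (auto intro!: sum.cong)
  also have "\<dots> = (\<Sum>u\<in>V. if u \<in> S then (\<Sum>v\<in>T. w u v) else 0)"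
    using a by (simp add: sum.inter_restrict[symmetric] Int_absorb1)
  also have "\<dots> = cut_weight w S T" unfolding cut_weight_def
    using a by (simp add: sum.inter_restrict[symmetric] Int_absorb1)
  finally show ?thesis .
qed

theorem mainTheorem5:
  fixes V :: "'a set" and w :: "'a \<Rightarrow> 'a \<Rightarrow> real" and Topt T :: "'a hctree"
  assumes "wgraph V w"
    and "card V \<ge> 2"
    and "conductance V w > 0"
    and "optimal_hc_tree V w Topt"
    and "real (card (leaves (dense_end V w Topt))) \<ge> (real (card V) - 1) / 2"
    and "hc_tree V T"
  shows "hc_cost V w T \<le> 8 / conductance V w * hc_cost V w Topt"
proof -
  note g = assms(1)
  define S where "S = vol V w V"
  define \<Phi> where "\<Phi> = conductance V w"
  have fin: "finite V" using g by (simp add: wgraph_def)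
  have wnn: "\<And>u v. u \<in> V \<Longrightarrow> v \<in> V \<Longrightarrow> w u v \<ge> 0" using g by (simp add: wgraph_def)
  have S0: "S \<ge> 0" unfolding S_def using vol_nonneg[OF g] by simp
  have SS: "S = (\<Sum>u\<in>V. \<Sum>v\<in>V. w u v)" unfolding S_def vol_def deg_def by simp
  have Phi0: "\<Phi> > 0" using assms(3) \<Phi>_def by simp
  have Phi1: "\<Phi> \<le> 1" using cond_le1[OF g assms(2)] \<Phi>_def by simp
  have dT: "distinct (leaf_list T)" and lT: "leaves T = V"
    using assms(6) by (auto simp: hc_tree_def leaves_def)
  have dO: "distinct (leaf_list Topt)" and lO: "leaves Topt = V"
    using assms(4) by (auto simp: optimal_hc_tree_def hc_tree_def leaves_def)
  have cT: "2 * hc_cost V w T = (\<Sum>u\<in>V. \<Sum>v\<in>V. w u v * real (lca_size T u v))"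
    unfolding hc_cost_def by simp
  have cO: "2 * hc_cost V w Topt = (\<Sum>u\<in>V. \<Sum>v\<in>V. w u v * real (lca_size Topt u v))"
    unfolding hc_cost_def by simp
  have "2 * hc_cost V w T \<le> (\<Sum>u\<in>V. \<Sum>v\<in>V. w u v * real (card V))"
    unfolding cT
  proof (intro sum_mono mult_left_mono)
    fix u v assume "u \<in> V" "v \<in> V"
    then show "w u v \<ge> 0" by (rule wnn)
    show "real (lca_size T u v) \<le> real (card V)" using lca_le_card[of T u v] lT by simp
  qed
  also have "\<dots> = real (card V) * S" unfolding SS
    by (simp add: sum_distrib_left sum_distrib_right mult.commute)
  finally have up: "2 * hc_cost V w T \<le> real (card V) * S" .
  define D where "D = dense_end V w Topt"
  have subD: "sub D Topt" unfolding D_def by (rule dense_sub)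
  have dD: "distinct (leaf_list D)" using sub_distinct[OF subD dO] .
  have AV: "leaves D \<subseteq> V" using sub_leaves[OF subD] lO by simp
  have mge: "real (card (leaves D)) \<ge> (real (card V) - 1) / 2" using assms(5) D_def by simp
  have c8: "8 / \<Phi> \<ge> 0" using Phi0 by simp
  show ?thesis
  proof (cases D)
    case (Leaf x)
    then have n3: "real (card V) \<le> 3" using mge by simp
    have "2 * S \<le> 2 * hc_cost V w Topt" unfolding cO SS sum_distrib_left
    proof (intro sum_mono)
      fix u v assume uv: "u \<in> V" "v \<in> V"
      show "2 * w u v \<le> w u v * real (lca_size Topt u v)"
      proof (cases "u = v")
        case True then show ?thesis using g uv by (simp add: wgraph_def)
      next
        case False
        then have "2 \<le> lca_size Topt u v" using lca_ge2[of u Topt v] lO uv by simp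
        then have "(2::real) \<le> real (lca_size Topt u v)" by simp
        from mult_left_mono[OF this wnn[OF uv]] show ?thesis by (simp add: mult.commute)
      qed
    qed
    then have lo: "S \<le> hc_cost V w Topt" by simp
    have "8 / \<Phi> \<ge> 8" using Phi0 Phi1 by (simp add: le_divide_eq)
    from mult_right_mono[OF this S0] have "8 * S \<le> 8 / \<Phi> * S" .
    also have "\<dots> \<le> 8 / \<Phi> * hc_cost V w Topt" using mult_left_mono[OF lo c8] .
    finally have "8 * S \<le> 8 / \<Phi> * hc_cost V w Topt" .
    moreover have "real (card V) * S \<le> 3 * S" using n3 S0 by (simp add: mult_right_mono)
    ultimately have "hc_cost V w T \<le> 8 / \<Phi> * hc_cost V w Topt" using up S0 by linarith
    then show ?thesis by (simp add: \<Phi>_def)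
  next
    case (Node l r)
    define L where "L = leaves l"
    define R where "R = leaves r"
    define A where "A = leaves D"
    define C where "C = V - A"
    define m where "m = card A"
    have A: "A = L \<union> R" unfolding A_def L_def R_def Node by simp
    have LR: "L \<inter> R = {}" using disj dD Node L_def R_def by simp
    have dn: "vol V w L \<le> S / 2 \<and> vol V w R \<le> S / 2 \<and> (A = V \<or> vol V w A > S / 2)"
    proof -
      have "dense_end V w Topt = Node l r" using D_def Node by simp
      from dense_node[OF this] show ?thesis using Node lO unfolding L_def R_def A_def S_def by simp
    qed
    have Lne: "L \<noteq> {}" "R \<noteq> {}" unfolding L_def R_def by (simp_all add: leaves_ne)
    have AV': "A \<subseteq> V" using AV A_def by simp
    have finL: "finite L" "finite R" "finite C" "finite A" using fin AV' A C_def
      by (auto intro: finite_subset)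
    have Lsub: "L \<subset> V" using Lne LR AV' A by blast
    have Rsub: "R \<subset> V" using Lne LR AV' A by blast
    have c1: "cut_weight w L (V - L) \<ge> \<Phi> * vol V w L"
      using cond_lemma[OF g assms(3) Lne(1) Lsub] dn \<Phi>_def S_def by simp
    have c2: "cut_weight w R (V - R) \<ge> \<Phi> * vol V w R"
      using cond_lemma[OF g assms(3) Lne(2) Rsub] dn \<Phi>_def S_def by simp
    have e6: "S = vol V w A + vol V w C"
    proof -
      have "V = A \<union> C" "A \<inter> C = {}" using AV' C_def by auto
      then show ?thesis unfolding S_def using vol_union[of A C V w] finL by simp
    qed
    have c3: "cut_weight w A C \<ge> \<Phi> * vol V w C"
    proof (cases "C = {}")
      case True then show ?thesis by (simp add: cut_weight_def vol_def)
    next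
      case False
      have "A \<noteq> {}" using A Lne by simp
      then have Csub: "C \<subset> V" using C_def AV' by blast
      have "A \<noteq> V" using False C_def by simp
      then have "vol V w C \<le> S / 2" using dn e6 by simp
      then have "cut_weight w C (V - C) \<ge> \<Phi> * vol V w C"
        using cond_lemma[OF g assms(3) False Csub] \<Phi>_def S_def by simp
      moreover have "V - C = A" using AV' C_def by auto
      moreover have "cut_weight w C A = cut_weight w A C" using cw_sym[OF g, of C A] AV' C_def by auto
      ultimately show ?thesis by simp
    qed
    have e1: "cut_weight w L (V - L) = cut_weight w L R + cut_weight w L C"
    proof -
      have "V - L = R \<union> C" "R \<inter> C = {}" using A AV' C_def LR by auto
      then show ?thesis using cw_union2 finL by simp
    qed
    have e2: "cut_weight w R (V - R) = cut_weight w R L + cut_weight w R C"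
    proof -
      have "V - R = L \<union> C" "L \<inter> C = {}" using A AV' C_def LR by auto
      then show ?thesis using cw_union2 finL by simp
    qed
    have e3: "cut_weight w A C = cut_weight w L C + cut_weight w R C"
      using cw_union1 finL A LR by simp
    have e4: "cut_weight w R L = cut_weight w L R" using cw_sym[OF g, of R L] A AV' by auto
    have e5: "vol V w A = vol V w L + vol V w R" using vol_union finL A LR by simp
    have key: "2 * (cut_weight w L R + cut_weight w A C) \<ge> \<Phi> * S"
      using c1 c2 c3 e1 e2 e3 e4 e5 e6 by (simp add: algebra_simps)
    have lcaLR: "lca_size Topt u v = m" if "u \<in> L" "v \<in> R" for u v
    proof -
      have "lca_size Topt u v = lca_size D u v"
        using lca_sub_in[OF subD dO] that A A_def by auto
      also have "\<dots> = m" using that LR Node L_def R_def m_def A_def by auto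
      finally show ?thesis .
    qed
    have lcaout: "lca_size Topt u v \<ge> m" if "u \<in> A" "v \<in> C" for u v
      using lca_sub_out[OF subD dO, of u v] that lO C_def m_def A_def by auto
    define f where "f u v = (if u \<in> L \<and> v \<in> R then w u v else 0) + (if u \<in> R \<and> v \<in> L then w u v else 0)
      + (if u \<in> A \<and> v \<in> C then w u v else 0) + (if u \<in> C \<and> v \<in> A then w u v else 0)" for u v
    have pw: "real m * f u v \<le> w u v * real (lca_size Topt u v)" if uv: "u \<in> V" "v \<in> V" for u v
    proof -
      have w0: "w u v \<ge> 0" using wnn uv by simp
      consider "u \<in> L \<and> v \<in> R" | "u \<in> R \<and> v \<in> L" | "u \<in> A \<and> v \<in> C" | "u \<in> C \<and> v \<in> A"
        | "\<not> (u \<in> L \<and> v \<in> R) \<and> \<not> (u \<in> R \<and> v \<in> L) \<and> \<not> (u \<in> A \<and> v \<in> C) \<and> \<not> (u \<in> C \<and> v \<in> A)"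
        by blast
      then show ?thesis
      proof cases
        case 1
        then have "f u v = w u v" unfolding f_def using LR A C_def by auto
        then show ?thesis using lcaLR 1 by simp
      next
        case 2
        then have "f u v = w u v" unfolding f_def using LR A C_def by auto
        moreover have "lca_size Topt u v = m" using lcaLR[of v u] 2 lca_sym by metis
        ultimately show ?thesis by simp
      next
        case 3
        then have "f u v = w u v" unfolding f_def using LR A C_def by auto
        moreover have "real m \<le> real (lca_size Topt u v)" using lcaout 3 by simp
        ultimately show ?thesis using mult_right_mono[OF _ w0, of "real m" "real (lca_size Topt u v)"] by (simp add: mult.commute)
      next
        case 4
        then have "f u v = w u v" unfolding f_def using LR A C_def by auto
        moreover have "real m \<le> real (lca_size Topt u v)" using lcaout[of v u] 4 lca_sym[of Topt u v] by simp
        ultimately show ?thesis using mult_right_mono[OF _ w0, of "real m" "real (lca_size Topt u v)"] by (simp add: mult.commute)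
      next
        case 5
        then have "f u v = 0" unfolding f_def by auto
        then show ?thesis using w0 by simp
      qed
    qed
    have CV: "C \<subseteq> V" using C_def by auto
    have Lv: "L \<subseteq> V" "R \<subseteq> V" using Lsub Rsub by auto
    have sf: "(\<Sum>u\<in>V. \<Sum>v\<in>V. f u v) = cut_weight w L R + cut_weight w R L + cut_weight w A C + cut_weight w C A"
      unfolding f_def sum.distrib using sumsum[OF fin] Lv AV' CV by simp
    have "cut_weight w C A = cut_weight w A C" using cw_sym[OF g, of C A] AV' CV by auto
    then have sf2: "(\<Sum>u\<in>V. \<Sum>v\<in>V. f u v) = 2 * (cut_weight w L R + cut_weight w A C)"
      using sf e4 by simp
    have "real m * (2 * (cut_weight w L R + cut_weight w A C)) \<le> 2 * hc_cost V w Topt"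
      unfolding cO sf2[symmetric] sum_distrib_left by (intro sum_mono pw)
    moreover have "real m * (\<Phi> * S) \<le> real m * (2 * (cut_weight w L R + cut_weight w A C))"
      using key by (simp add: mult_left_mono)
    ultimately have lo: "real m * \<Phi> * S \<le> 2 * hc_cost V w Topt" by simp
    have "8 / \<Phi> * hc_cost V w Topt \<ge> 8 / \<Phi> * (real m * \<Phi> * S / 2)"
      using lo c8 by (intro mult_left_mono) auto
    also have "8 / \<Phi> * (real m * \<Phi> * S / 2) = 4 * real m * S" using Phi0 by simp
    finally have h1: "8 / \<Phi> * hc_cost V w Topt \<ge> 4 * real m * S" .
    have "4 * real m * S \<ge> 2 * (real (card V) - 1) * S"
      using mge m_def A_def S0 by (intro mult_right_mono) auto
    moreover have "2 * (real (card V) - 1) * S \<ge> real (card V) / 2 * S"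
    proof -
      have "real (card V) \<ge> 2" using assms(2) by simp
      then have "real (card V) / 2 \<le> 2 * (real (card V) - 1)" by simp
      from mult_right_mono[OF this S0] show ?thesis .
    qed
    moreover have "real (card V) / 2 * S = (real (card V) * S) / 2" by simp
    ultimately have "hc_cost V w T \<le> 8 / \<Phi> * hc_cost V w Topt" using h1 up by linarith
    then show ?thesis by (simp add: \<Phi>_def)
  qed
qed

end
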